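(* Let $p$ be a prime, $f\ge 1$ an integer and $q=p^f$. For $0\le j\le f-1$ fix integers $r_j\ge 0$ such that $r=r_0+r_1p+\cdots+r_{f-1}p^{f-1}>0$ is divisible by $q-1$. For a tuple $(k_0,\dots,k_{f-1})$ of integers write $k=k_0+k_1p+\cdots+k_{f-1}p^{f-1}$. Then for every integer $i\in[0,q-1)$, \[ \sum_{\substack{0\le k_j\le r_j\ (0\le j\le f-1)\\ k\equiv i \bmod (q-1)}} \binom{r_0}{k_0}\binom{r_1}{k_1}\cdots\binom{r_{f-1}}{k_{f-1}} \equiv \begin{cases} (-1)^i \pmod p & \text{if } i\in(0,q-1),\\ 2 \pmod p & \text{if } i=0.\end{cases} \]
   Context: Here the $r_j$ are arbitrary non-negative integers (not necessarily base-$p$ digits; they may exceed $p-1$). *)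

theory Defs
  imports "HOL-Number_Theory.Number_Theory" "HOL-Library.FuncSet"
begin

end

theory Submission
  imports Defs "HOL-Computational_Algebra.Polynomial"
begin

definition Dp :: "int \<Rightarrow> int poly \<Rightarrow> bool" where
  "Dp m A \<longleftrightarrow> (\<forall>n. m dvd coeff A n)"

lemma Dp_0[simp]: "Dp m 0" by (simp add: Dp_def)
lemma Dp_add: "Dp m A \<Longrightarrow> Dp m B \<Longrightarrow> Dp m (A + B)"
  by (simp add: Dp_def)
lemma Dp_diff: "Dp m A \<Longrightarrow> Dp m B \<Longrightarrow> Dp m (A - B)"
  by (simp add: Dp_def)
lemma Dp_multR: "Dp m A \<Longrightarrow> Dp m (A * B)"
  unfolding Dp_def coeff_mult by (auto intro!: dvd_sum)
lemma Dp_multL: "Dp m A \<Longrightarrow> Dp m (B * A)"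
  by (metis Dp_multR mult.commute)
lemma Dp_sum: "(\<And>x. x \<in> S \<Longrightarrow> Dp m (g x)) \<Longrightarrow> Dp m (\<Sum>x\<in>S. g x)"
  unfolding Dp_def coeff_sum by (auto intro!: dvd_sum)

lemma Dp_mult_cong: "Dp m (A - A') \<Longrightarrow> Dp m (B - B') \<Longrightarrow> Dp m (A * B - A' * B')"
proof -
  assume a: "Dp m (A - A')" and b: "Dp m (B - B')"
  have "A * B - A' * B' = (A - A') * B + A' * (B - B')" by (simp add: algebra_simps)
  thus ?thesis using a b by (simp add: Dp_add Dp_multR Dp_multL)
qed

lemma Dp_power_cong: "Dp m (A - B) \<Longrightarrow> Dp m (A ^ n - B ^ n)"
  by (induction n) (auto intro: Dp_mult_cong)

lemma Dp_prod_cong: "(\<And>j. j \<in> S \<Longrightarrow> Dp m (a j - b j)) \<Longrightarrow> Dp m ((\<Prod>j\<in>S. a j) - (\<Prod>j\<in>S. b j))"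
  by (induction S rule: infinite_finite_induct) (auto intro: Dp_mult_cong)

lemma frob:
  fixes Y :: "int poly"
  assumes "prime p"
  shows "Dp (int p) ((1 + Y) ^ p - (1 + Y ^ p))"
proof -
  have p0: "p > 0" using assms prime_gt_0_nat by blast
  have "(Y + 1) ^ p = (\<Sum>k\<le>p. of_nat (p choose k) * Y ^ k * 1 ^ (p - k))"
    by (rule binomial_ring)
  also have "{..p} = insert 0 (insert p {1..<p})" using p0 by auto
  also have "(\<Sum>k\<in>insert 0 (insert p {1..<p}). of_nat (p choose k) * Y ^ k * 1 ^ (p - k)) =
     1 + (Y ^ p + (\<Sum>k\<in>{1..<p}. of_nat (p choose k) * Y ^ k))"
    using p0 by (simp add: sum.insert)
  finally have e: "(1 + Y) ^ p - (1 + Y ^ p) = (\<Sum>k\<in>{1..<p}. of_nat (p choose k) * Y ^ k)"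
    by (simp add: add.commute)
  show ?thesis unfolding e
  proof (rule Dp_sum)
    fix k assume k: "k \<in> {1..<p}"
    then have "p dvd (p choose k)" using dvd_choose_prime[of k p] assms by auto
    then obtain c where c: "p choose k = p * c" by blast
    have "coeff ((of_nat (p choose k) :: int poly) * Y ^ k) n = int p * (int c * coeff (Y ^ k) n)" for n
      by (simp add: c of_nat_poly)
    then show "Dp (int p) (of_nat (p choose k) * Y ^ k)"
      by (simp add: Dp_def)
  qed
qed

definition Fi :: "nat \<Rightarrow> int poly \<Rightarrow> nat \<Rightarrow> int" where
  "Fi N P i = (\<Sum>n\<le>degree P. if n mod N = i mod N then coeff P n else 0)"

lemma Fi_bound:
  assumes "degree P < M"
  shows "Fi N P i = (\<Sum>n<M. if n mod N = i mod N then coeff P n else 0)"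
proof -
  let ?g = "\<lambda>n. if n mod N = i mod N then coeff P n else 0"
  have e: "{..<M} = {..degree P} \<union> {degree P<..<M}" using assms by auto
  have z: "sum ?g {degree P<..<M} = 0"
    by (intro sum.neutral) (auto simp: coeff_eq_0)
  have "sum ?g {..<M} = sum ?g {..degree P} + sum ?g {degree P<..<M}"
    unfolding e by (rule sum.union_disjoint) auto
  then show ?thesis unfolding Fi_def using z by simp
qed

lemma Fi_add: "Fi N (P + Q) i = Fi N P i + Fi N Q i"
proof -
  define M where "M = Suc (max (degree P) (degree Q))"
  have "degree (P + Q) < M" using degree_add_le_max[of P Q] unfolding M_def by linarith
  then have "Fi N (P + Q) i = (\<Sum>n<M. if n mod N = i mod N then coeff (P + Q) n else 0)"
    by (rule Fi_bound)
  also have "\<dots> = (\<Sum>n<M. (if n mod N = i mod N then coeff P n else 0) + (if n mod N = i mod N then coeff Q n else 0))"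
    by (intro sum.cong) auto
  also have "\<dots> = Fi N P i + Fi N Q i"
    by (simp add: sum.distrib Fi_bound[of P M] Fi_bound[of Q M] M_def)
  finally show ?thesis .
qed

lemma Fi_uminus: "Fi N (- P) i = - Fi N P i"
  unfolding Fi_def by (simp add: sum_negf[symmetric] if_distrib cong: if_cong)

lemma Fi_diff: "Fi N (P - Q) i = Fi N P i - Fi N Q i"
  using Fi_add[of N P "- Q" i] Fi_uminus[of N Q i] by simp

lemma Fi_Dp: "Dp m A \<Longrightarrow> m dvd Fi N A i"
  unfolding Fi_def Dp_def by (auto intro!: dvd_sum)

lemma Fi_shift:
  assumes "N > 0"
  shows "Fi N (monom 1 N * B) i = Fi N B i"
proof -
  define M where "M = Suc (degree B)"
  have dB: "degree B < M" unfolding M_def by simp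
  have "degree (monom 1 N * B) < N + M"
    using degree_mult_le[of "monom (1::int) N" B] dB
    by (metis add_le_less_mono degree_monom_le le_less_trans order.strict_trans2 dual_order.refl)
  then have "Fi N (monom 1 N * B) i =
     (\<Sum>n<N + M. if n mod N = i mod N then coeff (monom 1 N * B) n else 0)"
    by (rule Fi_bound)
  also have "\<dots> = (\<Sum>n\<in>{..<N} \<union> {N..<N+M}. if n mod N = i mod N then coeff (monom 1 N * B) n else 0)"
    by (intro sum.cong) auto
  also have "\<dots> = (\<Sum>n\<in>{N..<N+M}. if n mod N = i mod N then coeff (monom 1 N * B) n else 0)"
    by (subst sum.union_disjoint) (auto simp: coeff_monom_mult)
  also have "\<dots> = (\<Sum>n\<in>{0..<M}. if (n + N) mod N = i mod N then coeff (monom 1 N * B) (n + N) else 0)"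
    by (subst sum.shift_bounds_nat_ivl[symmetric]) (simp add: add.commute)
  also have "\<dots> = (\<Sum>n<M. if n mod N = i mod N then coeff B n else 0)"
    by (intro sum.cong) (auto simp: coeff_monom_mult)
  also have "\<dots> = Fi N B i" using Fi_bound[OF dB] by simp
  finally show ?thesis .
qed

definition Iq :: "int \<Rightarrow> nat \<Rightarrow> int poly \<Rightarrow> bool" where
  "Iq m N D \<longleftrightarrow> (\<exists>A B. Dp m A \<and> D = A + (monom 1 N - 1) * B)"

lemma Iq_Dp: "Dp m A \<Longrightarrow> Iq m N A"
  unfolding Iq_def by (rule exI[of _ A], rule exI[of _ 0]) simp

lemma Iq_X: "Iq m N ((monom 1 N - 1) * B)"
  unfolding Iq_def by (rule exI[of _ 0], rule exI[of _ B]) simp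

lemma Iq_add: "Iq m N D \<Longrightarrow> Iq m N E \<Longrightarrow> Iq m N (D + E)"
  unfolding Iq_def
proof (elim exE conjE)
  fix A B A' B' assume "Dp m A" "D = A + (monom 1 N - 1) * B" "Dp m A'" "E = A' + (monom 1 N - 1) * B'"
  then show "\<exists>A B. Dp m A \<and> D + E = A + (monom 1 N - 1) * B"
    by (intro exI[of _ "A + A'"] exI[of _ "B + B'"]) (auto simp: Dp_add algebra_simps)
qed

lemma Iq_multR: "Iq m N D \<Longrightarrow> Iq m N (D * C)"
  unfolding Iq_def
proof (elim exE conjE)
  fix A B assume "Dp m A" "D = A + (monom 1 N - 1) * B"
  then show "\<exists>A B. Dp m A \<and> D * C = A + (monom 1 N - 1) * B"
    by (intro exI[of _ "A * C"] exI[of _ "B * C"]) (auto simp: Dp_multR distrib_right mult.assoc)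
qed

lemma Iq_multL: "Iq m N D \<Longrightarrow> Iq m N (C * D)"
  by (metis Iq_multR mult.commute)

lemma Iq_uminus: "Iq m N D \<Longrightarrow> Iq m N (- D)"
  using Iq_multR[of m N D "-1"] by simp

lemma Iq_diff: "Iq m N D \<Longrightarrow> Iq m N E \<Longrightarrow> Iq m N (D - E)"
  using Iq_add[of m N D "- E"] Iq_uminus by simp

lemma Iq_trans: "Iq m N (A - B) \<Longrightarrow> Iq m N (B - C) \<Longrightarrow> Iq m N (A - C)"
  using Iq_add[of m N "A - B" "B - C"] by simp

lemma Iq_Fi:
  assumes "Iq m N D" "N > 0"
  shows "m dvd Fi N D i"
proof -
  obtain A B where A: "Dp m A" and D: "D = A + (monom 1 N - 1) * B"
    using assms unfolding Iq_def by blast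
  have "Fi N ((monom 1 N - 1) * B) i = 0"
    using Fi_shift[OF assms(2), of B i] by (simp add: algebra_simps Fi_diff)
  then show ?thesis using Fi_Dp[OF A] by (simp add: D Fi_add)
qed

lemma X1_eq: "(1 + monom 1 1 :: int poly) = [:1, 1:]"
  by (simp add: monom_Suc monom_0 one_pCons)

lemma La:
  assumes "prime p"
  shows "Dp (int p) ([:1, 1:] ^ (p ^ j) - (1 + monom 1 (p ^ j)))"
proof (induction j)
  case 0
  then show ?case by (simp add: X1_eq[symmetric])
next
  case (Suc j)
  have e1: "[:1, 1:] ^ (p ^ Suc j) = ([:1, 1::int:] ^ (p ^ j)) ^ p"
    by (simp add: power_mult[symmetric] mult.commute)
  have e2: "(monom (1::int) (p ^ j)) ^ p = monom 1 (p ^ Suc j)"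
    by (simp add: monom_power mult.commute)
  have d1: "Dp (int p) (([:1, 1::int:] ^ (p ^ j)) ^ p - (1 + monom 1 (p ^ j)) ^ p)"
    using Suc by (rule Dp_power_cong)
  have d2: "Dp (int p) ((1 + monom 1 (p ^ j)) ^ p - (1 + monom 1 (p ^ Suc j)))"
    using frob[OF assms, of "monom 1 (p ^ j)"] e2 by simp
  have "([:1, 1::int:] ^ (p ^ j)) ^ p - (1 + monom 1 (p ^ j)) ^ p + ((1 + monom 1 (p ^ j)) ^ p - (1 + monom 1 (p ^ Suc j)))
     = [:1, 1:] ^ (p ^ Suc j) - (1 + monom 1 (p ^ Suc j))" unfolding e1 by simp
  then show ?case using Dp_add[OF d1 d2] by metis
qed

lemma binom_expand:
  "(1 + monom (1::int) e) ^ n = (\<Sum>k\<le>n. monom (int (n choose k)) (k * e))"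
proof -
  have "(monom (1::int) e + 1) ^ n = (\<Sum>k\<le>n. of_nat (n choose k) * monom 1 e ^ k * 1 ^ (n - k))"
    by (rule binomial_ring)
  also have "\<dots> = (\<Sum>k\<le>n. monom (int (n choose k)) (k * e))"
    by (intro sum.cong) (auto simp: monom_power of_nat_monom mult_monom mult.commute)
  finally show ?thesis by (simp add: add.commute)
qed

lemma prod_monom:
  "(\<Prod>j\<in>S. monom (c j) (e j)) = monom (\<Prod>j\<in>S. c j) (\<Sum>j\<in>S. e j)"
  by (induction S rule: infinite_finite_induct) (auto simp: mult_monom monom_0 one_pCons)

lemma Fi_0[simp]: "Fi N 0 i = 0" unfolding Fi_def by (intro sum.neutral) auto

lemma Fi_sum: "Fi N (\<Sum>g\<in>S. P g) i = (\<Sum>g\<in>S. Fi N (P g) i)"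
  by (induction S rule: infinite_finite_induct) (auto simp: Fi_add)

lemma Fi_monom: "Fi N (monom c e) i = (if e mod N = i mod N then c else 0)"
proof -
  have "degree (monom c e) < Suc e" using degree_monom_le[of c e] by linarith
  then have "Fi N (monom c e) i = (\<Sum>n<Suc e. if n mod N = i mod N then coeff (monom c e) n else 0)"
    by (rule Fi_bound)
  also have "\<dots> = (\<Sum>n\<in>{e}. if n mod N = i mod N then coeff (monom c e) n else 0)"
    by (intro sum.mono_neutral_right) (auto simp: coeff_monom)
  finally show ?thesis by simp
qed

lemma coeff_X1_pow: "coeff ([:1, 1::int:] ^ n) m = int (n choose m)"
proof (cases "m \<le> n")
  case True
  then show ?thesis using coeff_linear_poly_power[OF True, of "1::int" 1] by simp
next
  case False
  then show ?thesis using degree_linear_power[of "1::int" n] by (simp add: coeff_eq_0)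
qed

lemma choose_q_dvd:
  assumes "prime p" "0 < m" "m < p ^ f"
  shows "int p dvd int (p ^ f choose m)"
proof -
  have "int p dvd coeff ([:1, 1:] ^ (p ^ f) - (1 + monom 1 (p ^ f))) m"
    using La[OF assms(1), of f] unfolding Dp_def by blast
  moreover have "coeff ([:1, 1:] ^ (p ^ f) - (1 + monom 1 (p ^ f))) m = int (p ^ f choose m)"
    using assms(2,3) by (simp add: coeff_X1_pow coeff_monom)
  ultimately show ?thesis by simp
qed

lemma choose_N_cong:
  assumes "prime p" "f \<ge> 1" "m \<le> p ^ f - 1"
  shows "[int (p ^ f - 1 choose m) = (-1) ^ m] (mod int p)"
  using assms(3)
proof (induction m)
  case 0
  then show ?case by simp
next
  case (Suc m)
  have p1: "p ^ f \<ge> 1" using assms(1) prime_gt_0_nat by (simp add: Suc_le_eq)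
  have "Suc (p ^ f - 1) choose Suc m = (p ^ f - 1 choose m) + (p ^ f - 1 choose Suc m)"
    by (rule binomial_Suc_Suc)
  then have e: "p ^ f choose Suc m = (p ^ f - 1 choose m) + (p ^ f - 1 choose Suc m)"
    using p1 by (metis Suc_diff_1 One_nat_def le_neq_implies_less less_one not_less_eq_eq nat_less_le zero_less_iff_neq_zero Suc_le_eq)
  have "int p dvd int (p ^ f choose Suc m)"
    using choose_q_dvd[OF assms(1), of "Suc m" f] Suc.prems by simp
  then have "[int (p ^ f - 1 choose m) + int (p ^ f - 1 choose Suc m) = 0] (mod int p)"
    unfolding e by (simp add: cong_0_iff)
  moreover have "[int (p ^ f - 1 choose m) = (-1) ^ m] (mod int p)"
    using Suc by simp
  ultimately have "[(-1) ^ m + int (p ^ f - 1 choose Suc m) = 0] (mod int p)"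
    by (metis cong_add_rcancel cong_sym cong_trans add.commute)
  then have "[(-1) ^ m + int (p ^ f - 1 choose Suc m) + (-1) ^ Suc m = 0 + (-1) ^ Suc m] (mod int p)"
    by (rule cong_add) simp
  then show ?case by simp
qed

lemma idem:
  assumes "prime p" "f \<ge> 1" "t \<ge> 1"
  shows "Iq (int p) (p ^ f - 1) (([:1, 1:] ^ (p ^ f - 1)) ^ t - [:1, 1:] ^ (p ^ f - 1))"
proof -
  define N where "N = p ^ f - 1"
  define X where "X = ([:1, 1:] :: int poly)"
  have pp: "p \<ge> 2" using assms(1) prime_ge_2_nat by blast
  have "p ^ 1 \<le> p ^ f" using assms(2) pp by (intro power_increasing) auto
  then have p2: "p ^ f \<ge> 2" using pp by simp
  then have N1: "N \<ge> 1" and q: "p ^ f = N + 1" unfolding N_def by auto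
  have "Iq (int p) N (X ^ (p ^ f) - (1 + monom 1 (p ^ f)))"
    using La[OF assms(1), of f] unfolding X_def by (rule Iq_Dp)
  moreover have "(1 + monom 1 (p ^ f)) - X = (monom 1 N - 1) * monom 1 1"
    unfolding X_def X1_eq[symmetric] q by (simp add: left_diff_distrib mult_monom)
  ultimately have A: "Iq (int p) N (X ^ (p ^ f) - X)"
    using Iq_add[of "int p" N "X ^ (p ^ f) - (1 + monom 1 (p ^ f))" "(monom 1 N - 1) * monom 1 1"] Iq_X
    by (metis diff_add_cancel add_diff_eq)
  have B: "Iq (int p) N ((X ^ N) ^ 2 - X ^ N)"
  proof -
    have "(X ^ N) ^ 2 - X ^ N = (X ^ (p ^ f) - X) * X ^ (N - 1)"
    proof -
      have e1: "(X ^ N) ^ 2 = X ^ (N + 1) * X ^ (N - 1)"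
      proof -
        have "N * 2 = (N + 1) + (N - 1)" using N1 by simp
        then show ?thesis by (metis power_mult power_add)
      qed
      have e2: "X ^ N = X * X ^ (N - 1)"
        using N1 by (metis One_nat_def Suc_diff_le diff_Suc_1 power_Suc)
      show ?thesis unfolding q e1 by (subst e2) (simp add: left_diff_distrib)
    qed
    then show ?thesis using Iq_multR[OF A] by simp
  qed
  have "Iq (int p) N ((X ^ N) ^ t - X ^ N)" using assms(3)
  proof (induction t rule: dec_induct)
    case base
    then show ?case using Iq_Dp[of "int p" 0] by simp
  next
    case (step t)
    have "(X ^ N) ^ Suc t - X ^ N = X ^ N * ((X ^ N) ^ t - X ^ N) + ((X ^ N) ^ 2 - X ^ N)"
      by (simp add: power2_eq_square right_diff_distrib)
    then show ?case using Iq_add[OF Iq_multL[OF step.IH] B] by (metis add_diff_eq)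
  qed
  then show ?thesis unfolding N_def X_def .
qed

lemma Fi_u:
  assumes "prime p" "f \<ge> 1" "i < p ^ f - 1"
  shows "[Fi (p ^ f - 1) ([:1, 1:] ^ (p ^ f - 1)) i = (if i = 0 then 2 else (-1) ^ i)] (mod int p)"
proof -
  define N where "N = p ^ f - 1"
  have iN: "i < N" using assms(3) unfolding N_def .
  have F: "Fi N ([:1, 1:] ^ N) i = (\<Sum>n\<le>N. if n mod N = i mod N then int (N choose n) else 0)"
    unfolding Fi_def degree_linear_power coeff_X1_pow ..
  show ?thesis
  proof (cases "i = 0")
    case True
    have "(\<Sum>n\<le>N. if n mod N = i mod N then int (N choose n) else 0)
        = (\<Sum>n\<in>{0, N}. if n mod N = i mod N then int (N choose n) else 0)"
    proof (intro sum.mono_neutral_right)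
      show "\<forall>n\<in>{..N} - {0, N}. (if n mod N = i mod N then int (N choose n) else 0) = 0"
        using True by auto
    qed auto
    also have "\<dots> = 2" using True iN by simp
    finally show ?thesis using True F unfolding N_def by simp
  next
    case False
    have "(\<Sum>n\<le>N. if n mod N = i mod N then int (N choose n) else 0)
        = (\<Sum>n\<in>{i}. if n mod N = i mod N then int (N choose n) else 0)"
    proof (intro sum.mono_neutral_right)
      show "\<forall>n\<in>{..N} - {i}. (if n mod N = i mod N then int (N choose n) else 0) = 0"
      proof
        fix n assume n: "n \<in> {..N} - {i}"
        have "n mod N \<noteq> i"
        proof (cases "n = N")
          case True then show ?thesis using False by simp
        next
          case F2: False then have "n < N" using n by auto
          then show ?thesis using n by simp
        qed
        then show "(if n mod N = i mod N then int (N choose n) else 0) = 0" using iN by simp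
      qed
    qed (use iN in auto)
    also have "\<dots> = int (N choose i)" using iN by simp
    finally show ?thesis using False F choose_N_cong[OF assms(1,2), of i] iN unfolding N_def by simp
  qed
qed

lemma Dp_sym: "Dp m (A - B) \<Longrightarrow> Dp m (B - A)"
  using Dp_diff[of m 0 "A - B"] by simp

theorem lemma1:
  fixes p f i :: nat and r :: "nat \<Rightarrow> nat"
  assumes "prime p" and "f \<ge> 1"
    and "(\<Sum>j<f. r j * p ^ j) > 0"
    and "(p ^ f - 1) dvd (\<Sum>j<f. r j * p ^ j)"
    and "i < p ^ f - 1"
  shows "[(\<Sum>k \<in> {k \<in> Pi\<^sub>E {..<f} (\<lambda>j. {..r j}).
              [(\<Sum>j<f. k j * p ^ j) = i] (mod (p ^ f - 1))}.
            \<Prod>j<f. int (r j choose k j))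
          = (if i = 0 then 2 else (-1) ^ i)] (mod int p)"
proof -
  define N where "N = p ^ f - 1"
  define R where "R = (\<Sum>j<f. r j * p ^ j)"
  define X where "X = ([:1, 1:] :: int poly)"
  define P0 where "P0 = (\<Prod>j<f. (1 + monom (1::int) (p ^ j)) ^ r j)"
  have N0: "N > 0" using assms(5) unfolding N_def by simp
  obtain t where t: "R = N * t" using assms(4) unfolding N_def R_def by blast
  have t1: "t \<ge> 1" using assms(3) t unfolding R_def by (cases t) auto
  let ?S = "Pi\<^sub>E {..<f} (\<lambda>j. {..r j})"
  have "P0 = (\<Prod>j<f. \<Sum>k\<le>r j. monom (int (r j choose k)) (k * p ^ j))"
    unfolding P0_def binom_expand ..
  also have "\<dots> = (\<Sum>g\<in>?S. \<Prod>j<f. monom (int (r j choose g j)) (g j * p ^ j))"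
    by (rule prod_sum_PiE) auto
  also have "\<dots> = (\<Sum>g\<in>?S. monom (\<Prod>j<f. int (r j choose g j)) (\<Sum>j<f. g j * p ^ j))"
    unfolding prod_monom ..
  finally have "Fi N P0 i = (\<Sum>g\<in>?S. if (\<Sum>j<f. g j * p ^ j) mod N = i mod N
                   then (\<Prod>j<f. int (r j choose g j)) else 0)"
    by (simp add: Fi_sum Fi_monom)
  also have "\<dots> = (\<Sum>k \<in> {k \<in> ?S. [(\<Sum>j<f. k j * p ^ j) = i] (mod N)}. \<Prod>j<f. int (r j choose k j))"
  proof -
    have fin: "finite ?S" by (rule finite_PiE) auto
    show ?thesis unfolding cong_def by (rule sum.inter_filter[OF fin, symmetric])
  qed
  finally have LHS: "Fi N P0 i = (\<Sum>k \<in> {k \<in> ?S. [(\<Sum>j<f. k j * p ^ j) = i] (mod N)}. \<Prod>j<f. int (r j choose k j))" .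
  have XR: "X ^ R = (\<Prod>j<f. (X ^ (p ^ j)) ^ r j)"
    unfolding R_def power_sum by (simp add: power_mult[symmetric] mult.commute)
  have D1: "Dp (int p) (P0 - X ^ R)"
    unfolding P0_def XR
  proof (rule Dp_prod_cong)
    fix j assume "j \<in> {..<f}"
    have "Dp (int p) (X ^ (p ^ j) - (1 + monom 1 (p ^ j)))" using La[OF assms(1), of j] unfolding X_def .
    then show "Dp (int p) ((1 + monom 1 (p ^ j)) ^ r j - (X ^ p ^ j) ^ r j)"
      by (intro Dp_power_cong) (rule Dp_sym)
  qed
  have I2: "Iq (int p) N (X ^ R - X ^ N)"
    using idem[OF assms(1,2) t1] unfolding t X_def N_def by (simp add: power_mult)
  have "Iq (int p) N (P0 - X ^ N)"
    using Iq_add[OF Iq_Dp[OF D1] I2] by simp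
  then have "int p dvd Fi N P0 i - Fi N (X ^ N) i"
    using Iq_Fi[OF _ N0] Fi_diff by metis
  then have "[Fi N P0 i = Fi N (X ^ N) i] (mod int p)"
    by (simp add: cong_iff_dvd_diff)
  moreover have "[Fi N (X ^ N) i = (if i = 0 then 2 else (-1) ^ i)] (mod int p)"
    using Fi_u[OF assms(1,2,5)] unfolding N_def X_def .
  ultimately show ?thesis using LHS unfolding N_def by (metis cong_trans)
qed

end
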